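(* Let $\gamma\colon[0,1]\to(0,1)^d$ be a $1$-Lipschitz curve which is $\theta$-flat in direction $u\in\mathbb{S}^{d-1}$ around an interval $I\subseteq[0,1]$, where $\theta\in(0,1/3)$. Let $\varepsilon>0$ and let $f\colon[0,1]^d\to\mathbb{R}$ be Lipschitz with $\operatorname{Lip}(f)<1$. Then for every $\alpha\in(0,1)$ there exist an $\alpha$-conical function $f_{\varepsilon,I}$ (with respect to $\gamma$, $f$, $I$) and a closed Lebesgue-null set $N\subseteq I$ such that: (i) $\operatorname{Lip}(f_{\varepsilon,I})<1$ and $\|f_{\varepsilon,I}-f\|_\infty<\varepsilon$; (ii) there is $\tau\in(1-\alpha,1)$ such that for every connected component $J$ of $I\setminus N$ there is $p=p_J\in N$ with $f_{\varepsilon,I}(x)=f(\gamma(p))+\tau\|x-\gamma(p)\|$ for all $x\in\gamma(J)$, and $f_{\varepsilon,I}$ is continuously differentiable on an open neighbourhood $U_f(\gamma(J))$ of $\gamma(J)$ with $\nabla f_{\varepsilon,I}(x)=\tau\frac{x-\gamma(p)}{\|x-\gamma(p)\|}$ for all $x\in U_f(\gamma(J))$.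
   Context: A Lipschitz curve is a Lipschitz map $\gamma\colon I\to\mathbb{R}^d$, $I$ a closed interval, whose derivative is bounded away from zero in norm a.e. $\gamma$ is $\theta$-flat in direction $u$ around an interval $I$ if for all $t_1,t_2\in[0,1]$ with $\operatorname{dist}(t_i,I)<\mathcal{L}(I)$ (length of $I$) we have $\|\gamma(t_1)-\gamma(t_2)-(t_1-t_2)u\|\leq\theta|t_1-t_2|$. Given a $1$-Lipschitz curve $\gamma$, an interval $I\subseteq[0,1]$, a finite set $P\subseteq I$, a Lipschitz $f\colon[0,1]^d\to\mathbb{R}$ and $\sigma,\tau>0$, let $Y_{\sigma,I,P}=\{y\in[0,1]^d\colon\operatorname{dist}(y,\gamma(I))\geq\sigma\}\cup\gamma(P)$ and define the conical function $\Phi_{\gamma,f,I,P,\sigma,\tau}(x)=\inf_{y\in Y_{\sigma,I,P}}(f(y)+\tau\|x-y\|)$, $x\in[0,1]^d$. For $\alpha\in(0,1)$, such a function with $\tau>1-\alpha$ is called $\alpha$-conical. *)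

theory Defs
  imports "HOL-Analysis.Analysis"
begin

definition lipschitz_curve :: "real \<Rightarrow> (real \<Rightarrow> 'a::euclidean_space) \<Rightarrow> bool" where
  "lipschitz_curve L \<gamma> \<longleftrightarrow> L-lipschitz_on {0..1} \<gamma> \<and>
     (\<exists>c>0. AE t in lborel. t \<in> {0..1} \<longrightarrow>
        (\<exists>D. (\<gamma> has_vector_derivative D) (at t) \<and> c \<le> norm D))"

definition theta_flat ::
  "(real \<Rightarrow> 'a::euclidean_space) \<Rightarrow> real \<Rightarrow> 'a \<Rightarrow> real \<Rightarrow> real \<Rightarrow> bool" where
  "theta_flat \<gamma> \<theta> u a b \<longleftrightarrow>
     (\<forall>t1\<in>{0..1}. \<forall>t2\<in>{0..1}.
        infdist t1 {a..b} < b - a \<and> infdist t2 {a..b} < b - a \<longrightarrow>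
        norm (\<gamma> t1 - \<gamma> t2 - (t1 - t2) *\<^sub>R u) \<le> \<theta> * \<bar>t1 - t2\<bar>)"

definition conical_Y ::
  "(real \<Rightarrow> 'a::euclidean_space) \<Rightarrow> real \<Rightarrow> real \<Rightarrow> real set \<Rightarrow> real \<Rightarrow> 'a set" where
  "conical_Y \<gamma> a b P \<sigma> =
     {y \<in> cbox 0 One. \<sigma> \<le> infdist y (\<gamma> ` {a..b})} \<union> \<gamma> ` P"

definition conical_fun ::
  "(real \<Rightarrow> 'a::euclidean_space) \<Rightarrow> ('a \<Rightarrow> real) \<Rightarrow> real \<Rightarrow> real \<Rightarrow> real set
     \<Rightarrow> real \<Rightarrow> real \<Rightarrow> 'a \<Rightarrow> real" where
  "conical_fun \<gamma> f a b P \<sigma> \<tau> x =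
     (INF y \<in> conical_Y \<gamma> a b P \<sigma>. f y + \<tau> * norm (x - y))"

definition alpha_conical ::
  "real \<Rightarrow> (real \<Rightarrow> 'a::euclidean_space) \<Rightarrow> ('a \<Rightarrow> real) \<Rightarrow> real \<Rightarrow> real
     \<Rightarrow> ('a \<Rightarrow> real) \<Rightarrow> bool" where
  "alpha_conical \<alpha> \<gamma> f a b g \<longleftrightarrow>
     (\<exists>P \<sigma> \<tau>. finite P \<and> P \<subseteq> {a..b} \<and> \<sigma> > 0 \<and> \<tau> > 1 - \<alpha> \<and>
        (\<forall>x\<in>cbox 0 One. g x = conical_fun \<gamma> f a b P \<sigma> \<tau> x))"

end

theory Submission
  imports Defs
begin


lemma disjoint_null_countable:
  fixes A :: "real \<Rightarrow> real set" and a b :: real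
  assumes meas: "\<And>i. A i \<in> sets lborel" and sub: "\<And>i. A i \<subseteq> {a..b}"
    and disj: "disjoint_family A"
  shows "countable {i. A i \<notin> null_sets lborel}"
proof -
  let ?m = "\<lambda>i. measure lborel (A i)"
  have ab: "{a..b} \<in> fmeasurable lborel" using fmeasurable_cbox[of a b] by simp
  have fm: "A i \<in> fmeasurable lborel" for i
    using fmeasurableI2[OF ab sub meas] .
  have mle: "measure lborel (\<Union>i\<in>X. A i) \<le> measure lborel {a..b}" if "finite X" for X
    by (rule measure_mono_fmeasurable[OF _ _ ab]) (use sub meas that in auto)
  have "{i. A i \<notin> null_sets lborel} \<subseteq> (\<Union>n. {i. 1 / Suc n < ?m i})"
  proof
    fix i assume "i \<in> {i. A i \<notin> null_sets lborel}"
    then have "?m i \<noteq> 0" using fm meas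
      by (metis (no_types, lifting) emeasure_eq_measure2 ennreal_0 mem_Collect_eq null_setsI)
    then have pos: "?m i > 0" by (simp add: order_less_le)
    obtain n :: nat where "1 / ?m i < n" using reals_Archimedean2 by blast
    then have "1 / Suc n < ?m i" using pos
      by (smt (verit, ccfv_SIG) divide_less_eq le_divide_eq_1_pos nonzero_mult_div_cancel_left of_nat_Suc of_nat_0_le_iff)
    then show "i \<in> (\<Union>n. {i. 1 / Suc n < ?m i})" by blast
  qed
  moreover have "finite {i. 1 / Suc n < ?m i}" for n
  proof (rule ccontr)
    assume inf: "infinite {i. 1 / Suc n < ?m i}"
    define K where "K = Suc (nat \<lceil>measure lborel {a..b}\<rceil>) * Suc n"
    obtain X where X: "finite X" "card X = K" "X \<subseteq> {i. 1 / Suc n < ?m i}"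
      using infinite_arbitrarily_large[OF inf] by blast
    have "measure lborel (\<Union>i\<in>X. A i) = (\<Sum>i\<in>X. ?m i)"
      using X meas disj fm
      by (intro measure_finite_Union) (auto simp: fmeasurable_def disjoint_family_on_def disjoint_family_subset less_top[symmetric])
    also have "\<dots> \<ge> (\<Sum>i\<in>X. 1 / Suc n)"
      by (rule sum_mono) (use X in auto)
    finally have "real K / Suc n \<le> measure lborel {a..b}"
      using mle[of X] X by simp
    moreover have "real K / Suc n = Suc (nat \<lceil>measure lborel {a..b}\<rceil>)"
      unfolding K_def by (simp only: of_nat_mult) simp
    ultimately show False by linarith
  qed
  ultimately show ?thesis
    by (meson countable_UN countable_finite countable_subset UNIV_I countableI_type)
qed



lemma flat_ab:
  assumes flat: "theta_flat \<gamma> \<theta> u a b" and ab: "a < b" "0 \<le> a" "b \<le> 1"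
    and t: "t1 \<in> {a..b}" "t2 \<in> {a..b}"
  shows "norm (\<gamma> t1 - \<gamma> t2 - (t1 - t2) *\<^sub>R u) \<le> \<theta> * \<bar>t1 - t2\<bar>"
proof -
  have i: "t1 \<in> {0..1}" "t2 \<in> {0..1}" using t ab by auto
  have d: "infdist t1 {a..b} < b - a" "infdist t2 {a..b} < b - a"
    using t ab by (simp_all add: infdist_zero)
  show ?thesis using flat i d unfolding theta_flat_def by blast
qed

lemma flat_inner_ne:
  fixes \<gamma> :: "real \<Rightarrow> 'a::euclidean_space"
  assumes flat: "theta_flat \<gamma> \<theta> u a b" and ab: "a < b" "0 \<le> a" "b \<le> 1"
    and th: "0 < \<theta>" "\<theta> < 1/3" and u: "norm u = 1"
    and t: "t1 \<in> {a..b}" "t2 \<in> {a..b}" "p \<in> {a..b}" "q \<in> {a..b}" "t1 \<noteq> t2" "p \<noteq> q"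
  shows "(\<gamma> t2 - \<gamma> t1) \<bullet> (\<gamma> q - \<gamma> p) \<noteq> 0"
proof -
  define s where "s = t2 - t1"
  define r where "r = q - p"
  define e where "e = \<gamma> t2 - \<gamma> t1 - s *\<^sub>R u"
  define e' where "e' = \<gamma> q - \<gamma> p - r *\<^sub>R u"
  have ne: "norm e \<le> \<theta> * \<bar>s\<bar>" unfolding e_def s_def using flat_ab[OF flat ab t(2,1)] .
  have ne': "norm e' \<le> \<theta> * \<bar>r\<bar>" unfolding e'_def r_def using flat_ab[OF flat ab t(4,3)] .
  have uu: "u \<bullet> u = 1" using u by (simp add: dot_square_norm)
  have eq: "(\<gamma> t2 - \<gamma> t1) \<bullet> (\<gamma> q - \<gamma> p) = s * r + s * (u \<bullet> e') + r * (e \<bullet> u) + e \<bullet> e'"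
  proof -
    have "(\<gamma> t2 - \<gamma> t1) \<bullet> (\<gamma> q - \<gamma> p) = (s *\<^sub>R u + e) \<bullet> (r *\<^sub>R u + e')"
      unfolding e_def e'_def by simp
    also have "\<dots> = s * r * (u \<bullet> u) + s * (u \<bullet> e') + r * (e \<bullet> u) + e \<bullet> e'"
      by (simp add: inner_add_left inner_add_right algebra_simps)
    finally show ?thesis using uu by simp
  qed
  have b1: "\<bar>u \<bullet> e'\<bar> \<le> norm e'" using Cauchy_Schwarz_ineq2[of u e'] u by simp
  have b2: "\<bar>e \<bullet> u\<bar> \<le> norm e" using Cauchy_Schwarz_ineq2[of e u] u by simp
  have b3: "\<bar>e \<bullet> e'\<bar> \<le> norm e * norm e'" using Cauchy_Schwarz_ineq2[of e e'] by simp
  have "\<bar>s * (u \<bullet> e')\<bar> \<le> \<bar>s\<bar> * (\<theta> * \<bar>r\<bar>)"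
    using b1 ne' by (simp add: abs_mult mult_left_mono)
  moreover have "\<bar>r * (e \<bullet> u)\<bar> \<le> \<bar>r\<bar> * (\<theta> * \<bar>s\<bar>)"
    using b2 ne by (simp add: abs_mult mult_left_mono)
  moreover have "\<bar>e \<bullet> e'\<bar> \<le> (\<theta> * \<bar>s\<bar>) * (\<theta> * \<bar>r\<bar>)"
    using b3 ne ne' by (meson mult_mono norm_ge_zero order.trans)
  moreover have "\<bar>s\<bar> * \<bar>r\<bar> > 0" using t unfolding s_def r_def by simp
  moreover have "\<theta> * \<theta> \<le> \<theta> / 3" using th by (simp add: mult_left_mono)
  ultimately have "\<bar>s * (u \<bullet> e') + r * (e \<bullet> u) + e \<bullet> e'\<bar> < \<bar>s * r\<bar>"
  proof -
    assume a: "\<bar>s * (u \<bullet> e')\<bar> \<le> \<bar>s\<bar> * (\<theta> * \<bar>r\<bar>)" "\<bar>r * (e \<bullet> u)\<bar> \<le> \<bar>r\<bar> * (\<theta> * \<bar>s\<bar>)"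
      "\<bar>e \<bullet> e'\<bar> \<le> (\<theta> * \<bar>s\<bar>) * (\<theta> * \<bar>r\<bar>)" "\<bar>s\<bar> * \<bar>r\<bar> > 0" "\<theta> * \<theta> \<le> \<theta> / 3"
    define P where "P = \<bar>s\<bar> * \<bar>r\<bar>"
    have "(\<theta> * \<bar>s\<bar>) * (\<theta> * \<bar>r\<bar>) = (\<theta>*\<theta>) * P" unfolding P_def by simp
    also have "\<dots> \<le> (\<theta>/3) * P" using a(5) a(4) unfolding P_def by (intro mult_right_mono) auto
    finally have c: "\<bar>e \<bullet> e'\<bar> \<le> (\<theta>/3) * P" using a(3) by linarith
    have "\<bar>s * (u \<bullet> e')\<bar> \<le> \<theta> * P" "\<bar>r * (e \<bullet> u)\<bar> \<le> \<theta> * P" using a(1,2) unfolding P_def by (simp_all add: algebra_simps)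
    moreover have "(2 * \<theta> + \<theta>/3) * P < 1 * P"
      by (rule mult_strict_right_mono) (use th a(4) in \<open>auto simp: P_def\<close>)
    moreover have "\<bar>s * (u \<bullet> e') + r * (e \<bullet> u) + e \<bullet> e'\<bar> \<le> \<bar>s * (u \<bullet> e')\<bar> + \<bar>r * (e \<bullet> u)\<bar> + \<bar>e \<bullet> e'\<bar>"
      by (rule order.trans[OF abs_triangle_ineq add_right_mono[OF abs_triangle_ineq]])
    moreover have "\<bar>s * r\<bar> = P" unfolding P_def by (simp add: abs_mult)
    moreover have "(2 * \<theta> + \<theta>/3) * P = 2 * (\<theta> * P) + (\<theta>/3) * P" by (simp add: algebra_simps)
    ultimately show ?thesis using c by linarith
  qed
  then show ?thesis unfolding eq by linarith
qed

lemma flat_inj: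
  fixes \<gamma> :: "real \<Rightarrow> 'a::euclidean_space"
  assumes flat: "theta_flat \<gamma> \<theta> u a b" and ab: "a < b" "0 \<le> a" "b \<le> 1"
    and th: "0 < \<theta>" "\<theta> < 1/3" and u: "norm u = 1"
    and t: "t1 \<in> {a..b}" "t2 \<in> {a..b}" "t1 \<noteq> t2"
  shows "\<gamma> t1 \<noteq> \<gamma> t2"
  using flat_inner_ne[OF flat ab th u t(1,2,1,2) t(3) t(3)] by auto


lemma infdist_lessE:
  fixes x :: "'a::metric_space"
  assumes "infdist x A < d" "A \<noteq> {}"
  obtains y where "y \<in> A" "dist x y < d"
proof -
  have "bdd_below ((\<lambda>a. dist x a) ` A)" by (rule bdd_belowI[of _ 0]) auto
  then show ?thesis using assms that by (auto simp: infdist_notempty cINF_less_iff)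
qed

lemma conegrad:
  fixes c :: "'a::euclidean_space"
  assumes "x \<noteq> c"
  shows "((\<lambda>x. k + \<tau> * norm (x - c)) has_derivative
           (\<lambda>h. ((\<tau> / norm (x - c)) *\<^sub>R (x - c)) \<bullet> h)) (at x)"
proof -
  have n: "(norm has_derivative (\<lambda>h. h \<bullet> sgn (x - c))) (at (x - c))"
    using has_derivative_norm[of "x - c"] assms by simp
  have "((\<lambda>x. norm (x - c)) has_derivative (\<lambda>h. h \<bullet> sgn (x - c))) (at x)"
    using has_derivative_compose[OF has_derivative_diff[OF has_derivative_ident has_derivative_const] n]
    by simp
  then have "((\<lambda>x. k + \<tau> * norm (x - c)) has_derivative (\<lambda>h. 0 + \<tau> * (h \<bullet> sgn (x - c)))) (at x)"
    by (intro has_derivative_add has_derivative_const has_derivative_mult_right)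
  then show ?thesis
    by (rule has_derivative_eq_rhs) (auto simp: sgn_div_norm inner_commute inner_scaleR_right divide_inverse)
qed

theorem lemma3p10:
  fixes \<gamma> :: "real \<Rightarrow> 'a::euclidean_space"
    and f :: "'a \<Rightarrow> real"
    and u :: 'a
    and a b \<theta> \<epsilon> \<alpha> :: real
  assumes curve: "lipschitz_curve 1 \<gamma>"
    and range: "\<gamma> ` {0..1} \<subseteq> box 0 One"
    and I: "0 \<le> a" "a \<le> b" "b \<le> 1"
    and u: "norm u = 1"
    and theta: "0 < \<theta>" "\<theta> < 1/3"
    and flat: "theta_flat \<gamma> \<theta> u a b"
    and eps: "\<epsilon> > 0"
    and f_lip: "\<exists>L<1. L-lipschitz_on (cbox 0 One) f"
    and alpha: "0 < \<alpha>" "\<alpha> < 1"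
  shows "\<exists>g N. alpha_conical \<alpha> \<gamma> f a b g \<and>
           closed N \<and> N \<in> null_sets lborel \<and> N \<subseteq> {a..b} \<and>
           (\<exists>L<1. L-lipschitz_on (cbox 0 One) g) \<and>
           (SUP x \<in> cbox 0 One. \<bar>g x - f x\<bar>) < \<epsilon> \<and>
           (\<exists>\<tau>. 1 - \<alpha> < \<tau> \<and> \<tau> < 1 \<and>
              (\<forall>J \<in> components ({a..b} - N). \<exists>p \<in> N.
                 (\<forall>x \<in> \<gamma> ` J. g x = f (\<gamma> p) + \<tau> * norm (x - \<gamma> p)) \<and>
                 (\<exists>U. open U \<and> \<gamma> ` J \<subseteq> U \<and> U \<subseteq> cbox 0 One \<and>
                    (\<forall>x \<in> U. (g has_derivative
                        (\<lambda>h. ((\<tau> / norm (x - \<gamma> p)) *\<^sub>R (x - \<gamma> p)) \<bullet> h)) (at x)) \<and>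
                    continuous_on U (\<lambda>x. (\<tau> / norm (x - \<gamma> p)) *\<^sub>R (x - \<gamma> p)))))"
proof -
  let ?C = "cbox (0::'a) One"
  obtain L where L: "L < 1" "L-lipschitz_on ?C f" using f_lip by blast
  have L0: "0 \<le> L" using L(2) lipschitz_on_nonneg by blast
  have fL: "\<bar>f x - f y\<bar> \<le> L * norm (x - y)" if "x \<in> ?C" "y \<in> ?C" for x y
    using lipschitz_onD[OF L(2) that] by (simp add: dist_real_def dist_norm)
  have glip: "norm (\<gamma> s - \<gamma> t) \<le> \<bar>s - t\<bar>" if "s \<in> {0..1}" "t \<in> {0..1}" for s t
  proof -
    have "1-lipschitz_on {0..1} \<gamma>" using curve unfolding lipschitz_curve_def by (rule conjunct1)
    from lipschitz_onD[OF this that] show ?thesis by (simp add: dist_norm dist_real_def)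
  qed
  have gcont: "continuous_on {0..1} \<gamma>"
  proof -
    have "1-lipschitz_on {0..1} \<gamma>" using curve unfolding lipschitz_curve_def by (rule conjunct1)
    then show ?thesis by (rule lipschitz_on_continuous_on)
  qed
  have gcontab: "continuous_on {a..b} \<gamma>"
    using continuous_on_subset[OF gcont] I by auto
  have gC: "\<gamma> t \<in> ?C" if "t \<in> {0..1}" for t
  proof -
    have "\<gamma> t \<in> box 0 One" using range that by (rule subsetD[OF _ imageI])
    then show ?thesis using box_subset_cbox[of 0 One] by (rule subsetD[rotated])
  qed
  have gCab: "\<gamma> t \<in> ?C" if "t \<in> {a..b}" for t
    using gC that I by simp
  define \<tau>0 where "\<tau>0 = (max L (1 - \<alpha>) + 1) / 2"
  have t0: "L < \<tau>0" "1 - \<alpha> < \<tau>0" "\<tau>0 < 1" "0 < \<tau>0"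
    using L alpha L0 unfolding \<tau>0_def by auto
  define \<sigma> where "\<sigma> = \<epsilon> / 8"
  define \<delta> where "\<delta> = min (\<sigma>/2) ((\<tau>0 - L) * \<sigma> / 8)"
  have sig: "\<sigma> > 0" using eps unfolding \<sigma>_def by simp
  have del: "\<delta> > 0" "\<delta> \<le> \<sigma>/2" "\<delta> \<le> (\<tau>0 - L) * \<sigma> / 8"
    using sig t0 unfolding \<delta>_def by auto
  have "\<exists>k. finite k \<and> k \<subseteq> {a..b} \<and> {a..b} \<subseteq> (\<Union>x\<in>k. ball x \<delta>)"
    using seq_compact_imp_totally_bounded[OF compact_imp_seq_compact[OF compact_Icc[of a b]]] del(1)
    by simp
  then obtain P where P: "finite P" "P \<subseteq> {a..b}" "{a..b} \<subseteq> (\<Union>p\<in>P. ball p \<delta>)"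
    by auto
  have Pnear: "\<exists>p\<in>P. \<bar>t - p\<bar> < \<delta>" if "t \<in> {a..b}" for t
  proof -
    have "t \<in> (\<Union>p\<in>P. ball p \<delta>)" using P(3) that by (rule subsetD)
    then obtain p where "p \<in> P" "t \<in> ball p \<delta>" by (rule UN_E)
    then show ?thesis by (auto simp: dist_real_def abs_minus_commute)
  qed
  have Pne: "P \<noteq> {}" using Pnear[of a] I by auto
  define \<phi> where "\<phi> = (\<lambda>\<tau> p x. f (\<gamma> p) + \<tau> * norm (x - \<gamma> p))"
  define A where "A = (\<lambda>\<tau> p q. {t\<in>{a..b}. \<phi> \<tau> p (\<gamma> t) = \<phi> \<tau> q (\<gamma> t)})"
  have Aclosed: "closed (A \<tau> p q)" for \<tau> p q
  proof -
    have "continuous_on {a..b} (\<lambda>t. \<phi> \<tau> p (\<gamma> t) - \<phi> \<tau> q (\<gamma> t))"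
      unfolding \<phi>_def by (intro continuous_intros gcontab)
    from continuous_closed_preimage_constant[OF this closed_atLeastAtMost, of 0]
    show ?thesis unfolding A_def by simp
  qed
  have Ameas: "A \<tau> p q \<in> sets lborel" for \<tau> p q
    using Aclosed by simp
  have Asub: "A \<tau> p q \<subseteq> {a..b}" for \<tau> p q unfolding A_def by auto
  have bad_countable: "countable {\<tau>. 0 < \<tau> \<and> A \<tau> p q \<notin> null_sets lborel}"
    if pq: "p \<in> P" "q \<in> P" "p \<noteq> q" for p q
  proof (cases "f (\<gamma> p) = f (\<gamma> q)")
    case True
    have sub1: "A \<tau> p q \<subseteq> {t\<in>{a..b}. norm (\<gamma> t - \<gamma> p) = norm (\<gamma> t - \<gamma> q)}" if "0 < \<tau>" for \<tau>
      using that True unfolding A_def \<phi>_def by auto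
    have sub2: "{t\<in>{a..b}. norm (\<gamma> t - \<gamma> p) = norm (\<gamma> t - \<gamma> q)} \<subseteq> {a}" if "a = b"
      using that by auto
    have sub3: "t1 = t2" if "a < b" "t1 \<in> {t\<in>{a..b}. norm (\<gamma> t - \<gamma> p) = norm (\<gamma> t - \<gamma> q)}"
      "t2 \<in> {t\<in>{a..b}. norm (\<gamma> t - \<gamma> p) = norm (\<gamma> t - \<gamma> q)}" for t1 t2
    proof (rule ccontr)
      assume ne: "t1 \<noteq> t2"
      have h: "(\<gamma> t - \<gamma> p) \<bullet> (\<gamma> t - \<gamma> p) = (\<gamma> t - \<gamma> q) \<bullet> (\<gamma> t - \<gamma> q)"
        if "norm (\<gamma> t - \<gamma> p) = norm (\<gamma> t - \<gamma> q)" for t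
        using that by (simp add: dot_square_norm)
      have e1: "(\<gamma> t1 - \<gamma> p) \<bullet> (\<gamma> t1 - \<gamma> p) = (\<gamma> t1 - \<gamma> q) \<bullet> (\<gamma> t1 - \<gamma> q)"
        using h that(2) by auto
      have e2: "(\<gamma> t2 - \<gamma> p) \<bullet> (\<gamma> t2 - \<gamma> p) = (\<gamma> t2 - \<gamma> q) \<bullet> (\<gamma> t2 - \<gamma> q)"
        using h that(3) by auto
      have "(\<gamma> t2 - \<gamma> t1) \<bullet> (\<gamma> q - \<gamma> p) = 0"
        using e1 e2 by (simp add: inner_diff_left inner_diff_right inner_commute algebra_simps)
      moreover have "(\<gamma> t2 - \<gamma> t1) \<bullet> (\<gamma> q - \<gamma> p) \<noteq> 0"
        by (rule flat_inner_ne[OF flat that(1) I(1) I(3) theta u]) (use that ne pq P in auto)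
      ultimately show False by simp
    qed
    have fin: "finite {t\<in>{a..b}. norm (\<gamma> t - \<gamma> p) = norm (\<gamma> t - \<gamma> q)}"
    proof (cases "a = b")
      case True then show ?thesis using sub2 finite_subset by blast
    next
      case False
      then have "a < b" using I by simp
      show ?thesis
      proof (cases "{t\<in>{a..b}. norm (\<gamma> t - \<gamma> p) = norm (\<gamma> t - \<gamma> q)} = {}")
        case True then show ?thesis by (metis finite.emptyI)
      next
        case False
        then obtain t1 where t1: "t1 \<in> {t\<in>{a..b}. norm (\<gamma> t - \<gamma> p) = norm (\<gamma> t - \<gamma> q)}" by blast
        have "{t\<in>{a..b}. norm (\<gamma> t - \<gamma> p) = norm (\<gamma> t - \<gamma> q)} \<subseteq> {t1}"
          using sub3[OF \<open>a < b\<close> t1] by blast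
        then show ?thesis using finite_subset by blast
      qed
    qed
    have "A \<tau> p q \<in> null_sets lborel" if "0 < \<tau>" for \<tau>
      by (rule null_sets_subset[OF finite_imp_null_set_lborel[OF fin] Ameas sub1[OF that]])
    then have e: "{\<tau>. 0 < \<tau> \<and> A \<tau> p q \<notin> null_sets lborel} = {}"
      by blast
    show ?thesis unfolding e by (rule countable_empty)
  next
    case False
    define A' where "A' = (\<lambda>\<tau>. if 0 < \<tau> then A \<tau> p q else {})"
    have "disjoint_family A'"
      unfolding disjoint_family_on_def
    proof (intro ballI impI)
      fix m n :: real assume "m \<in> UNIV" "n \<in> UNIV" "m \<noteq> n"
      show "A' m \<inter> A' n = {}"
      proof (rule ccontr)
        assume "A' m \<inter> A' n \<noteq> {}"
        then obtain t where t: "t \<in> A' m" "t \<in> A' n" by blast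
        then have "0 < m" "0 < n" unfolding A'_def by (auto split: if_splits)
        then have "\<phi> m p (\<gamma> t) = \<phi> m q (\<gamma> t)" "\<phi> n p (\<gamma> t) = \<phi> n q (\<gamma> t)"
          using t unfolding A'_def A_def by auto
        then have "f (\<gamma> p) - f (\<gamma> q) = m * (norm (\<gamma> t - \<gamma> q) - norm (\<gamma> t - \<gamma> p))"
          "f (\<gamma> p) - f (\<gamma> q) = n * (norm (\<gamma> t - \<gamma> q) - norm (\<gamma> t - \<gamma> p))"
          unfolding \<phi>_def by (simp_all add: algebra_simps)
        then have "(m - n) * (norm (\<gamma> t - \<gamma> q) - norm (\<gamma> t - \<gamma> p)) = 0"
          by (simp add: algebra_simps)
        then have "norm (\<gamma> t - \<gamma> q) - norm (\<gamma> t - \<gamma> p) = 0" using \<open>m \<noteq> n\<close> by simp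
        then show False using False \<open>f (\<gamma> p) - f (\<gamma> q) = m * _\<close> by simp
      qed
    qed
    moreover have "A' \<tau> \<in> sets lborel" for \<tau>
      unfolding A'_def using Ameas by simp
    moreover have "A' \<tau> \<subseteq> {a..b}" for \<tau>
      unfolding A'_def using Asub by simp
    ultimately have "countable {\<tau>. A' \<tau> \<notin> null_sets lborel}"
      by (intro disjoint_null_countable[of A' a b])
    moreover have "{\<tau>. 0 < \<tau> \<and> A \<tau> p q \<notin> null_sets lborel} \<subseteq> {\<tau>. A' \<tau> \<notin> null_sets lborel}"
      unfolding A'_def by auto
    ultimately show ?thesis by (rule countable_subset[rotated])
  qed
  define Bad where "Bad = (\<Union>p\<in>P. \<Union>q\<in>P - {p}. {\<tau>. 0 < \<tau> \<and> A \<tau> p q \<notin> null_sets lborel})"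
  have cB: "countable Bad"
    unfolding Bad_def
  proof (intro countable_UN[OF countable_finite[OF P(1)]])
    fix p assume "p \<in> P"
    show "countable (\<Union>q\<in>P - {p}. {\<tau>. 0 < \<tau> \<and> A \<tau> p q \<notin> null_sets lborel})"
      by (rule countable_UN[OF countable_finite]) (use P(1) bad_countable \<open>p \<in> P\<close> in auto)
  qed
  have unc: "uncountable {\<tau>0<..<1}" using t0(3) uncountable_open_interval by simp
  have "\<not> {\<tau>0<..<1} \<subseteq> Bad"
  proof
    assume "{\<tau>0<..<1} \<subseteq> Bad"
    from countable_subset[OF this cB] unc show False by simp
  qed
  then obtain \<tau> where \<tau>: "\<tau> \<in> {\<tau>0<..<1}" "\<tau> \<notin> Bad"
    by (meson subsetI)
  have tau: "\<tau>0 < \<tau>" "\<tau> < 1" "L < \<tau>" "1 - \<alpha> < \<tau>" "0 < \<tau>"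
    using \<tau>(1) t0 by auto
  have Anull: "A \<tau> p q \<in> null_sets lborel" if "p \<in> P" "q \<in> P" "p \<noteq> q" for p q
    using \<tau>(2) that tau unfolding Bad_def by auto
  define Y where "Y = conical_Y \<gamma> a b P \<sigma>"
  define g where "g = conical_fun \<gamma> f a b P \<sigma> \<tau>"
  have gdef: "g x = (INF y\<in>Y. f y + \<tau> * norm (x - y))" for x
    unfolding g_def Y_def conical_fun_def by simp
  have YC: "Y \<subseteq> ?C"
    unfolding Y_def conical_Y_def using gCab P(2) by auto
  have PY: "\<gamma> q \<in> Y" if "q \<in> P" for q
    unfolding Y_def conical_Y_def using that by simp
  have Yne: "Y \<noteq> {}" using PY Pne by blast
  have Yfar: "\<sigma> \<le> infdist y (\<gamma> ` {a..b})" if "y \<in> Y" "y \<notin> \<gamma> ` P" for y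
    using that unfolding Y_def conical_Y_def by simp
  have lowb: "f x \<le> f y + \<tau> * norm (x - y)" if "x \<in> ?C" "y \<in> ?C" for x y
  proof -
    have "f x - f y \<le> L * norm (x - y)" using fL[OF that] by simp
    moreover have "L * norm (x - y) \<le> \<tau> * norm (x - y)"
      using tau by (intro mult_right_mono) auto
    ultimately show ?thesis by simp
  qed
  have bdd: "bdd_below ((\<lambda>y. f y + \<tau> * norm (x - y)) ` Y)" if "x \<in> ?C" for x
    using lowb[OF that] YC by (intro bdd_belowI[of _ "f x"]) auto
  have G2: "f x \<le> g x" if "x \<in> ?C" for x
    unfolding gdef using lowb[OF that] YC Yne by (intro cINF_greatest) auto
  have G3: "g x \<le> f y + \<tau> * norm (x - y)" if "x \<in> ?C" "y \<in> Y" for x y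
    unfolding gdef by (rule cINF_lower[OF bdd[OF that(1)] that(2)])
  have G4: "g x1 \<le> g x2 + \<tau> * norm (x1 - x2)" if "x1 \<in> ?C" "x2 \<in> ?C" for x1 x2
  proof -
    have "g x1 - \<tau> * norm (x1 - x2) \<le> g x2"
      unfolding gdef[of x2]
    proof (rule cINF_greatest[OF Yne])
      fix y assume y: "y \<in> Y"
      have "g x1 \<le> f y + \<tau> * norm (x1 - y)" by (rule G3[OF that(1) y])
      moreover have "norm (x1 - y) \<le> norm (x1 - x2) + norm (x2 - y)"
        using norm_triangle_ineq[of "x1 - x2" "x2 - y"] by simp
      then have "\<tau> * norm (x1 - y) \<le> \<tau> * norm (x1 - x2) + \<tau> * norm (x2 - y)"
        using tau mult_left_mono[of "norm (x1 - y)" "norm (x1 - x2) + norm (x2 - y)" \<tau>]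
        by (simp add: distrib_left)
      ultimately show "g x1 - \<tau> * norm (x1 - x2) \<le> f y + \<tau> * norm (x2 - y)"
        by linarith
    qed
    then show ?thesis by simp
  qed
  have glipg: "\<tau>-lipschitz_on ?C g"
  proof (rule lipschitz_onI)
    fix x y assume "x \<in> ?C" "y \<in> ?C"
    from G4[OF this] G4[OF this(2,1)] show "dist (g x) (g y) \<le> \<tau> * dist x y"
      by (simp add: dist_real_def dist_norm norm_minus_commute abs_le_iff)
  qed (use tau in simp)
  have gab_ne: "\<gamma> ` {a..b} \<noteq> {}" using I by auto
  have near: "\<exists>p\<in>P. norm (x - \<gamma> p) < r + \<delta>" if xC: "x \<in> ?C" and xd: "infdist x (\<gamma> ` {a..b}) < r" for x r
  proof -
    obtain z where z: "z \<in> \<gamma> ` {a..b}" "dist x z < r"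
      using infdist_lessE[OF xd gab_ne] by blast
    then obtain t where t: "t \<in> {a..b}" "z = \<gamma> t" by blast
    obtain p where p: "p \<in> P" "\<bar>t - p\<bar> < \<delta>" using Pnear[OF t(1)] by blast
    have "norm (\<gamma> t - \<gamma> p) \<le> \<bar>t - p\<bar>"
      using glip[of t p] t(1) p(1) P(2) I by auto
    then have "norm (x - \<gamma> p) < r + \<delta>"
      using norm_triangle_ineq[of "x - \<gamma> t" "\<gamma> t - \<gamma> p"] z(2) t(2) p(2)
      by (simp add: dist_norm)
    then show ?thesis using p(1) by blast
  qed
  have G5: "g x - f x \<le> 3 * \<sigma>" if xC: "x \<in> ?C" for x
  proof (cases "infdist x (\<gamma> ` {a..b}) < \<sigma>")
    case True
    obtain p where p: "p \<in> P" "norm (x - \<gamma> p) < \<sigma> + \<delta>" using near[OF xC True] by blast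
    have "g x \<le> f (\<gamma> p) + \<tau> * norm (x - \<gamma> p)" using G3[OF xC PY[OF p(1)]] .
    moreover have "f (\<gamma> p) \<le> f x + L * norm (x - \<gamma> p)"
      using fL[OF xC gCab[of p]] p(1) P(2) by auto
    moreover have "(L + \<tau>) * norm (x - \<gamma> p) \<le> 2 * (\<sigma> + \<delta>)"
      using p(2) tau L by (intro mult_mono) auto
    ultimately show ?thesis using del by (simp add: algebra_simps)
  next
    case False
    then have "x \<in> Y" unfolding Y_def conical_Y_def using xC by simp
    from G3[OF xC this] sig show ?thesis by simp
  qed
  have SUP: "(SUP x \<in> ?C. \<bar>g x - f x\<bar>) < \<epsilon>"
  proof -
    have "(SUP x \<in> ?C. \<bar>g x - f x\<bar>) \<le> 3 * \<sigma>"
    proof (rule cSUP_least)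
      have "(0::'a) \<in> ?C" by (simp add: mem_box)
      then show "?C \<noteq> {}" by blast
      fix x assume "x \<in> ?C"
      then show "\<bar>g x - f x\<bar> \<le> 3 * \<sigma>" using G2 G5 by (simp add: abs_le_iff)
    qed
    then show ?thesis using eps unfolding \<sigma>_def by simp
  qed
  have G7: "g x = \<phi> \<tau> p x"
    if x: "x \<in> ?C" "infdist x (\<gamma> ` {a..b}) < \<delta>" and p: "p \<in> P"
      and pmin: "\<And>q. q \<in> P \<Longrightarrow> \<phi> \<tau> p x \<le> \<phi> \<tau> q x" for x p
  proof (rule antisym)
    show "g x \<le> \<phi> \<tau> p x" unfolding \<phi>_def using G3[OF x(1) PY[OF p]] .
    show "\<phi> \<tau> p x \<le> g x"
      unfolding gdef
    proof (rule cINF_greatest[OF Yne])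
      fix y assume y: "y \<in> Y"
      show "\<phi> \<tau> p x \<le> f y + \<tau> * norm (x - y)"
      proof (cases "y \<in> \<gamma> ` P")
        case True
        then obtain q where "q \<in> P" "y = \<gamma> q" by blast
        then show ?thesis using pmin[of q] unfolding \<phi>_def by simp
      next
        case False
        have far: "\<sigma> \<le> infdist y (\<gamma> ` {a..b})" using Yfar[OF y False] .
        have "infdist y (\<gamma> ` {a..b}) \<le> infdist x (\<gamma> ` {a..b}) + dist y x"
          by (rule infdist_triangle)
        then have dxy: "\<sigma> - \<delta> < norm (x - y)" using far x(2) by (simp add: dist_norm norm_minus_commute)
        obtain p0 where p0: "p0 \<in> P" "norm (x - \<gamma> p0) < \<delta> + \<delta>" using near[OF x] by blast
        have yC: "y \<in> ?C" using y YC by blast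
        have "f x \<le> f y + L * norm (x - y)" using fL[OF x(1) yC] by simp
        moreover have "(\<tau> - L) * (\<sigma> - \<delta>) \<le> (\<tau> - L) * norm (x - y)"
          using dxy tau by (intro mult_left_mono) auto
        moreover have "(\<tau>0 - L) * (\<sigma>/2) \<le> (\<tau> - L) * (\<sigma> - \<delta>)"
          using tau t0 del sig by (intro mult_mono) auto
        moreover have "f (\<gamma> p0) \<le> f x + L * norm (x - \<gamma> p0)"
          using fL[OF x(1) gCab[of p0]] p0(1) P(2) by auto
        moreover have "(L + \<tau>) * norm (x - \<gamma> p0) \<le> 2 * (\<delta> + \<delta>)"
          using p0(2) tau L by (intro mult_mono) auto
        moreover have "\<phi> \<tau> p x \<le> \<phi> \<tau> p0 x" using pmin[OF p0(1)] .
        moreover have "(\<tau> - L) * (\<sigma> - \<delta>) \<le> (\<tau> - L) * norm (x - y)" using calculation(2) .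
        moreover have "4 * \<delta> \<le> (\<tau>0 - L) * (\<sigma>/2)" using del(3) by simp
        moreover have "(\<tau> - L) * norm (x - y) = \<tau> * norm (x - y) - L * norm (x - y)"
          by (simp add: left_diff_distrib)
        moreover have "(L + \<tau>) * norm (x - \<gamma> p0) = L * norm (x - \<gamma> p0) + \<tau> * norm (x - \<gamma> p0)"
          by (simp add: distrib_right)
        moreover have "\<phi> \<tau> p x = f (\<gamma> p) + \<tau> * norm (x - \<gamma> p)" by (simp add: \<phi>_def)
        moreover have "\<phi> \<tau> p0 x = f (\<gamma> p0) + \<tau> * norm (x - \<gamma> p0)" by (simp add: \<phi>_def)
        ultimately have K1: "(\<tau>0 - L) * (\<sigma>/2) \<le> \<tau> * norm (x - y) - L * norm (x - y)"
          and K2: "L * norm (x - \<gamma> p0) + \<tau> * norm (x - \<gamma> p0) \<le> 4 * \<delta>"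
          and K3: "4 * \<delta> \<le> (\<tau>0 - L) * (\<sigma>/2)"
          and K4: "\<phi> \<tau> p x \<le> f (\<gamma> p0) + \<tau> * norm (x - \<gamma> p0)"
          and K5: "f (\<gamma> p0) \<le> f x + L * norm (x - \<gamma> p0)"
          and K6: "f x \<le> f y + L * norm (x - y)"
          by auto
        from K1 K2 K3 K4 K5 K6 show ?thesis by linarith
      qed
    qed
  qed
  define N where "N = {a, b} \<union> P \<union> (\<Union>p\<in>P. \<Union>q\<in>P - {p}. A \<tau> p q)"
  have Nclosed: "closed N"
    unfolding N_def using P(1) Aclosed
    by (intro closed_Un closed_UN finite_imp_closed) auto
  have Nnull: "N \<in> null_sets lborel"
  proof -
    have "finite ({a, b} \<union> P)" using P(1) by simp
    then have n1: "{a, b} \<union> P \<in> null_sets lborel" by (rule finite_imp_null_set_lborel)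
    have n2: "(\<Union>p\<in>P. \<Union>q\<in>P - {p}. A \<tau> p q) \<in> null_sets lborel"
      using P(1) Anull by (intro null_sets.finite_UN) auto
    show ?thesis unfolding N_def using n1 n2 by (rule null_sets.Un)
  qed
  have "a \<in> {a..b}" "b \<in> {a..b}" using I by auto
  then have Nsub: "N \<subseteq> {a..b}" unfolding N_def using P(2) Asub by (intro Un_least UN_least) auto
  have PN: "P \<subseteq> N" unfolding N_def by auto
  have comp: "\<exists>p \<in> N.
                 (\<forall>x \<in> \<gamma> ` J. g x = f (\<gamma> p) + \<tau> * norm (x - \<gamma> p)) \<and>
                 (\<exists>U. open U \<and> \<gamma> ` J \<subseteq> U \<and> U \<subseteq> ?C \<and>
                    (\<forall>x \<in> U. (g has_derivative
                        (\<lambda>h. ((\<tau> / norm (x - \<gamma> p)) *\<^sub>R (x - \<gamma> p)) \<bullet> h)) (at x)) \<and>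
                    continuous_on U (\<lambda>x. (\<tau> / norm (x - \<gamma> p)) *\<^sub>R (x - \<gamma> p)))"
    if J: "J \<in> components ({a..b} - N)" for J
  proof -
    have Jsub: "J \<subseteq> {a..b} - N" using in_components_subset[OF J] .
    have Jconn: "connected J" using in_components_connected[OF J] .
    obtain t0 where t0J: "t0 \<in> J" using in_components_nonempty[OF J] by blast
    have t0ab: "a < t0" "t0 < b" using Jsub t0J unfolding N_def by auto
    then have ab: "a < b" by simp
    define m where "m = Min ((\<lambda>q. \<phi> \<tau> q (\<gamma> t0)) ` P)"
    have "m \<in> (\<lambda>q. \<phi> \<tau> q (\<gamma> t0)) ` P" unfolding m_def using P(1) Pne by (intro Min_in) auto
    then obtain p where p: "p \<in> P" "\<phi> \<tau> p (\<gamma> t0) = m" by blast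
    have pmin0: "\<phi> \<tau> p (\<gamma> t0) \<le> \<phi> \<tau> q (\<gamma> t0)" if "q \<in> P" for q
      unfolding p(2) m_def using P(1) that by (intro Min_le) auto
    have notie: "\<phi> \<tau> p (\<gamma> t) \<noteq> \<phi> \<tau> q (\<gamma> t)" if "t \<in> J" "q \<in> P" "q \<noteq> p" for t q
    proof
      assume "\<phi> \<tau> p (\<gamma> t) = \<phi> \<tau> q (\<gamma> t)"
      then have "t \<in> A \<tau> p q" unfolding A_def using that Jsub by auto
      then have "t \<in> N" unfolding N_def using p(1) that by blast
      then show False using that Jsub by auto
    qed
    have strict: "\<phi> \<tau> p (\<gamma> t) < \<phi> \<tau> q (\<gamma> t)" if t: "t \<in> J" and q: "q \<in> P" "q \<noteq> p" for t q
    proof (rule ccontr)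
      assume "\<not> \<phi> \<tau> p (\<gamma> t) < \<phi> \<tau> q (\<gamma> t)"
      then have h1: "\<phi> \<tau> q (\<gamma> t) - \<phi> \<tau> p (\<gamma> t) \<le> 0" by simp
      have h0: "0 \<le> \<phi> \<tau> q (\<gamma> t0) - \<phi> \<tau> p (\<gamma> t0)" using pmin0[OF q(1)] by simp
      define h where "h = (\<lambda>s. \<phi> \<tau> q (\<gamma> s) - \<phi> \<tau> p (\<gamma> s))"
      have "continuous_on J h"
        unfolding h_def \<phi>_def
        by (intro continuous_intros continuous_on_subset[OF gcontab]) (use Jsub in auto)
      then have "connected (h ` J)" using Jconn connected_continuous_image by blast
      moreover have "h t \<in> h ` J" "h t0 \<in> h ` J" using t t0J by auto
      ultimately have "0 \<in> h ` J" using h1 h0 unfolding h_def connected_iff_interval by blast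
      then obtain s where "s \<in> J" "h s = 0" by auto
      then show False using notie[OF \<open>s \<in> J\<close> q] unfolding h_def by simp
    qed
    define U where "U = (box 0 One \<inter> {x. infdist x (\<gamma> ` {a..b}) < \<delta>}
                         \<inter> (\<Inter>q\<in>P - {p}. {x. \<phi> \<tau> p x < \<phi> \<tau> q x})) - {\<gamma> p}"
    have Uopen: "open U"
    proof -
      have "open {x. infdist x (\<gamma> ` {a..b}) < \<delta>}"
        by (intro open_Collect_less continuous_intros)
      moreover have "open (\<Inter>q\<in>P - {p}. {x. \<phi> \<tau> p x < \<phi> \<tau> q x})"
      proof (rule open_INT)
        show "finite (P - {p})" using P(1) by simp
        show "\<forall>q\<in>P - {p}. open {x. \<phi> \<tau> p x < \<phi> \<tau> q x}"
        proof
          fix q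
          show "open {x. \<phi> \<tau> p x < \<phi> \<tau> q x}"
            unfolding \<phi>_def by (rule open_Collect_less; intro continuous_intros)
        qed
      qed
      ultimately show ?thesis unfolding U_def by (intro open_Diff open_Int open_box closed_singleton)
    qed
    have UC: "U \<subseteq> ?C" unfolding U_def using box_subset_cbox by blast
    have JU: "\<gamma> ` J \<subseteq> U"
    proof
      fix x assume "x \<in> \<gamma> ` J"
      then obtain t where t: "t \<in> J" "x = \<gamma> t" by blast
      have tab: "t \<in> {a..b}" using t Jsub by auto
      have "\<gamma> t \<in> box 0 One" using range tab I by auto
      moreover have "infdist (\<gamma> t) (\<gamma> ` {a..b}) < \<delta>" using tab del by simp
      moreover have "\<gamma> t \<in> (\<Inter>q\<in>P - {p}. {x. \<phi> \<tau> p x < \<phi> \<tau> q x})" using strict[OF t(1)] by auto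
      moreover have "\<gamma> t \<noteq> \<gamma> p"
      proof (rule flat_inj[OF flat ab I(1) I(3) theta u tab])
        show "p \<in> {a..b}" using p(1) P(2) by auto
        show "t \<noteq> p" using t(1) Jsub PN p(1) by auto
      qed
      ultimately show "x \<in> U" unfolding U_def t(2) by simp
    qed
    have gU: "g x = \<phi> \<tau> p x" if "x \<in> U" for x
    proof (rule G7)
      show "x \<in> ?C" using that UC by auto
      show "infdist x (\<gamma> ` {a..b}) < \<delta>" using that unfolding U_def by auto
      show "p \<in> P" by (rule p(1))
      fix q assume "q \<in> P"
      then show "\<phi> \<tau> p x \<le> \<phi> \<tau> q x" using that unfolding U_def by (cases "q = p") (auto, meson DiffI less_imp_le singletonD)
    qed
    have Uderiv: "(g has_derivative (\<lambda>h. ((\<tau> / norm (x - \<gamma> p)) *\<^sub>R (x - \<gamma> p)) \<bullet> h)) (at x)"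
      if "x \<in> U" for x
    proof -
      have "x \<noteq> \<gamma> p" using that unfolding U_def by auto
      from conegrad[OF this, of "f (\<gamma> p)" \<tau>]
      have "(\<phi> \<tau> p has_derivative (\<lambda>h. ((\<tau> / norm (x - \<gamma> p)) *\<^sub>R (x - \<gamma> p)) \<bullet> h)) (at x)"
        unfolding \<phi>_def by simp
      then show ?thesis
        by (rule has_derivative_transform_within_open[OF _ Uopen that]) (simp add: gU)
    qed
    have Ucont: "continuous_on U (\<lambda>x. (\<tau> / norm (x - \<gamma> p)) *\<^sub>R (x - \<gamma> p))"
      by (intro continuous_intros) (auto simp: U_def)
    show ?thesis
    proof (intro bexI[of _ p] conjI exI[of _ U] ballI)
      show "p \<in> N" using p(1) PN by auto
      fix x assume "x \<in> \<gamma> ` J"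
      then show "g x = f (\<gamma> p) + \<tau> * norm (x - \<gamma> p)" using gU JU unfolding \<phi>_def by auto
    qed (use Uopen JU UC Uderiv Ucont in auto)
  qed
  have conical: "alpha_conical \<alpha> \<gamma> f a b g"
    unfolding alpha_conical_def using P(1,2) sig tau by (intro exI[of _ P] exI[of _ \<sigma>] exI[of _ \<tau>]) (auto simp: g_def)
  show ?thesis
    apply (intro exI[of _ g] exI[of _ N] conjI conical Nclosed Nnull Nsub SUP)
    subgoal using glipg tau by blast
    subgoal using tau comp by blast
    done
qed

end
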